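(* Let $h:\mathbb{R}\to\mathbb{R}$ be a smooth function with $h(T)=\pi/2$ for $T\le 0$, $0<h(T)<\pi/2$ for $0<T<1$, and $h(T)=0$ for $T\ge 1$, and let $g(x)=\tan\bigl(h(x)\bigr)$ for $0<x<1$. Assume $g'''(x)<0$ for all $0<x<1$. Then $g''(x)>0$ and $g'(x)<0$ for $0<x<1$, and $$\lim_{x\to 1_-}\frac{g'(x)}{g(x)}=-\infty.$$ *)

theory Defs
  imports "HOL-Analysis.Analysis"
begin

definition smooth_real :: "(real \<Rightarrow> real) \<Rightarrow> bool" where
  "smooth_real f \<longleftrightarrow> (\<forall>n x. ((deriv ^^ n) f) differentiable (at x))"

end

theory Submission
  imports Defs "HOL-Real_Asymp.Real_Asymp"
begin

lemma deriv_zero_right: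
  fixes f :: "real \<Rightarrow> real"
  assumes d: "(f has_real_derivative D) (at a)" and c: "\<And>x. x \<ge> a \<Longrightarrow> f x = c"
  shows "D = 0"
proof -
  have "(f has_real_derivative D) (at a within {a<..})"
    using d by (rule has_field_derivative_at_within)
  hence "((\<lambda>y. (f y - f a) / (y - a)) \<longlongrightarrow> D) (at_right a)"
    by (simp add: has_field_derivative_iff)
  moreover have "((\<lambda>y. (f y - f a) / (y - a)) \<longlongrightarrow> 0) (at_right a)"
  proof (rule Lim_transform_eventually[OF tendsto_const])
    show "\<forall>\<^sub>F x in at_right a. 0 = (f x - f a) / (x - a)"
      by (rule eventually_at_rightI[where b="a+1"]) (auto simp: c)
  qed
  ultimately show ?thesis
    using tendsto_unique[OF trivial_limit_at_right_real] by blast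
qed

lemma limlemma: "filterlim (\<lambda>x::real. -1/(1-x)) at_bot (at_left 1)"
  by real_asymp

theorem mainTheorem3:
  fixes h g :: "real \<Rightarrow> real"
  assumes smooth: "smooth_real h"
    and h_neg: "\<And>T. T \<le> 0 \<Longrightarrow> h T = pi / 2"
    and h_mid: "\<And>T. 0 < T \<Longrightarrow> T < 1 \<Longrightarrow> 0 < h T \<and> h T < pi / 2"
    and h_pos: "\<And>T. T \<ge> 1 \<Longrightarrow> h T = 0"
    and g_def: "g = (\<lambda>x. tan (h x))"
    and g3: "\<And>x. 0 < x \<Longrightarrow> x < 1 \<Longrightarrow> (deriv ^^ 3) g x < 0"
  shows "(\<forall>x. 0 < x \<and> x < 1 \<longrightarrow> (deriv ^^ 2) g x > 0 \<and> deriv g x < 0)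
         \<and> filterlim (\<lambda>x. deriv g x / g x) at_bot (at_left 1)"
proof -
  define h1 where "h1 = deriv h"
  define h2 where "h2 = deriv h1"
  have dh: "(h has_real_derivative h1 x) (at x)" for x
    using smooth[unfolded smooth_real_def, rule_format, of 0 x]
    by (simp add: h1_def DERIV_deriv_iff_real_differentiable)
  have dh1: "(h1 has_real_derivative h2 x) (at x)" for x
    using smooth[unfolded smooth_real_def, rule_format, of 1 x]
    by (simp add: h1_def h2_def DERIV_deriv_iff_real_differentiable)
  have h2d: "h2 differentiable (at x)" for x
    using smooth[unfolded smooth_real_def, rule_format, of 2 x]
    by (simp add: h1_def h2_def numeral_2_eq_2)
  have h1z: "h1 x = 0" if "x \<ge> 1" for x
    using deriv_zero_right[OF dh, of x 0] h_pos that by auto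
  have h2z: "h2 x = 0" if "x \<ge> 1" for x
    using deriv_zero_right[OF dh1, of x 0] h1z that by auto
  have gz: "g x = 0" if "x \<ge> 1" for x
    using h_pos[OF that] g_def by simp
  define U where "U = {0::real<..}"
  have oU: "open U" by (simp add: U_def)
  have cosnz: "cos (h x) \<noteq> 0" if "x \<in> U" for x
  proof (cases "x < 1")
    case True
    then show ?thesis using h_mid[of x] that U_def
      by (simp add: cos_gt_zero_pi[THEN less_imp_neq, symmetric] less_imp_neq)
  next
    case False
    then show ?thesis using h_pos[of x] by simp
  qed
  define G1 where "G1 x = h1 x * (1 + (g x)^2)" for x
  define G2 where "G2 x = h2 x * (1 + (g x)^2) + h1 x * (2 * g x * G1 x)" for x
  have dg: "(g has_real_derivative G1 x) (at x)" if "x \<in> U" for x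
  proof -
    have "((\<lambda>x. tan (h x)) has_real_derivative inverse ((cos (h x))\<^sup>2) * h1 x) (at x)"
      by (rule DERIV_chain2[OF DERIV_tan[OF cosnz[OF that]] dh])
    moreover have "inverse ((cos (h x))\<^sup>2) = 1 + (g x)^2"
      using tan_sec[OF cosnz[OF that]] g_def by (simp add: power_inverse)
    ultimately show ?thesis unfolding G1_def g_def by (simp add: mult.commute)
  qed
  have dG1: "(G1 has_real_derivative G2 x) (at x)" if "x \<in> U" for x
    unfolding G1_def[abs_def] G2_def
    by (auto intro!: derivative_eq_intros dh1 dg[OF that] simp: G1_def)
  have d1eq: "deriv g x = G1 x" if "x \<in> U" for x
    using dg[OF that] by (rule DERIV_imp_deriv)
  have dg1: "(deriv g has_real_derivative G2 x) (at x)" if "x \<in> U" for x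
    using has_field_derivative_transform_within_open[OF dG1[OF that] oU that] d1eq by simp
  have d2eq: "(deriv ^^ 2) g x = G2 x" if "x \<in> U" for x
    using DERIV_imp_deriv[OF dg1[OF that]] by (simp add: numeral_2_eq_2)
  have G2d: "G2 differentiable (at x)" if "x \<in> U" for x
  proof -
    have "g differentiable (at x)" "G1 differentiable (at x)" "h1 differentiable (at x)"
      using dg[OF that] dG1[OF that] dh1 by (auto simp: real_differentiable_def)
    then show ?thesis unfolding G2_def[abs_def] using h2d
      by (intro differentiable_add differentiable_mult differentiable_power differentiable_const) auto
  qed
  have dg2: "((deriv ^^ 2) g has_real_derivative (deriv ^^ 3) g x) (at x)" if "x \<in> U" for x
  proof -
    have "(G2 has_real_derivative deriv G2 x) (at x)"
      using G2d[OF that] by (simp add: DERIV_deriv_iff_real_differentiable)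
    hence A: "((deriv ^^ 2) g has_real_derivative deriv G2 x) (at x)"
      using has_field_derivative_transform_within_open[OF _ oU that] d2eq by simp
    hence "deriv ((deriv ^^ 2) g) x = deriv G2 x" by (rule DERIV_imp_deriv)
    moreover have "(deriv ^^ 3) g = deriv ((deriv ^^ 2) g)"
      by (simp add: numeral_3_eq_3 numeral_2_eq_2)
    ultimately show ?thesis using A by simp
  qed
  have G1one: "G1 1 = 0" using h1z by (simp add: G1_def)
  have G2one: "G2 1 = 0" using h1z h2z by (simp add: G2_def)
  have pos2: "(deriv ^^ 2) g x > 0" if "0 < x" "x < 1" for x
  proof -
    have der: "((deriv ^^ 2) g has_real_derivative (deriv ^^ 3) g t) (at t)" if "x \<le> t" "t \<le> 1" for t
      using dg2 that \<open>0 < x\<close> U_def by simp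
    obtain z where z: "x < z" "z < 1"
      "(deriv ^^ 2) g 1 - (deriv ^^ 2) g x = (1 - x) * (deriv ^^ 3) g z"
      using MVT2[OF \<open>x < 1\<close> der] by blast
    have "(deriv ^^ 2) g 1 = 0" using d2eq G2one U_def by simp
    moreover have "(1 - x) * (deriv ^^ 3) g z < 0"
      using g3[of z] z that by (simp add: mult_pos_neg)
    ultimately show ?thesis using z by linarith
  qed
  have mono1: "deriv g x < deriv g y" if "0 < x" "x < y" "y \<le> 1" for x y
  proof -
    have der: "(deriv g has_real_derivative (deriv ^^ 2) g t) (at t)" if "x \<le> t" "t \<le> y" for t
      using dg1 d2eq that \<open>0 < x\<close> U_def by simp
    obtain z where z: "x < z" "z < y"
      "deriv g y - deriv g x = (y - x) * (deriv ^^ 2) g z"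
      using MVT2[OF \<open>x < y\<close> der] by blast
    have "(deriv ^^ 2) g z > 0" using pos2 z that by simp
    hence "(y - x) * (deriv ^^ 2) g z > 0" using z by simp
    then show ?thesis using z by linarith
  qed
  have neg1: "deriv g x < 0" if "0 < x" "x < 1" for x
    using mono1[of x 1] that d1eq[of 1] G1one U_def by simp
  have gpos: "g x > 0" if "0 < x" "x < 1" for x
    using h_mid[OF that] g_def by (simp add: tan_gt_zero)
  have ratio: "deriv g x / g x < -1 / (1 - x)" if "0 < x" "x < 1" for x
  proof -
    have der: "(g has_real_derivative G1 t) (at t)" if "x \<le> t" "t \<le> 1" for t
      using dg that \<open>0 < x\<close> U_def by simp
    obtain z where z: "x < z" "z < 1" "g 1 - g x = (1 - x) * G1 z"
      using MVT2[OF \<open>x < 1\<close> der] by blast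
    have "G1 z = deriv g z" using d1eq z that U_def by simp
    hence "G1 z > deriv g x" using mono1[of x z] z that by simp
    hence A: "(1 - x) * deriv g x < (1 - x) * G1 z" using that by simp
    have "g 1 = 0" using gz by simp
    hence gx0: "g x < -((1 - x) * deriv g x)" using z(3) A by linarith
    have gp: "g x > 0" using gpos that .
    show ?thesis using gx0 gp that by (simp add: field_simps)
  qed
  have lim: "filterlim (\<lambda>x. deriv g x / g x) at_bot (at_left 1)"
    unfolding filterlim_at_bot
  proof
    fix Z :: real
    have "\<forall>\<^sub>F x in at_left 1. -1/(1-x) \<le> Z"
      using limlemma unfolding filterlim_at_bot by blast
    moreover have "\<forall>\<^sub>F x in at_left (1::real). 0 < x \<and> x < 1"
      by (intro eventually_at_leftI[where a=0]) auto
    ultimately show "\<forall>\<^sub>F x in at_left 1. deriv g x / g x \<le> Z"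
      by eventually_elim (use ratio in force)
  qed
  show ?thesis using pos2 neg1 lim by auto
qed

end
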